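(* Let $\mu\in\mathcal M_{a,b,KN^{-1}}(\mathbb T^N)$ be a probability measure and let $B(k)$ be as defined below. For every permutation $(i_1,\dots,i_N)$ of $[1,N]$, every $k\in[1,N]$, $j\in[1,k-1]$, $x_{i_1},\dots,x_{i_{k-1}},x'_{i_j}\in\mathbb T$, and every $\psi\in L^1(\mathbb T^{N-k})$ with $\mathrm{Osc}\,\psi<\infty$, $$\int_{\mathbb T^{N-k}}\psi\,d\boldsymbol\Pi_{[i_{k+1},\dots,i_N]}\big[\mu_{(x_{i_1},\dots,x_{i_j},\dots,x_{i_{k-1}})}-\mu_{(x_{i_1},\dots,x'_{i_j},\dots,x_{i_{k-1}})}\big]\le 2B(k)\,\mathrm{Osc}\,\psi .$$
   Context: $\mathbb T=\mathbb R/\mathbb Z$. $\mu\in\mathcal M_{a,b,L}$ means: $\mu$ has density $\rho\in C^2(\mathbb T^N,(0,\infty))$, and for every $i$ the conditional densities $\rho_{\hat{\boldsymbol x}_i}(x)=\rho(x;\hat{\boldsymbol x}_i)/\int\rho(s;\hat{\boldsymbol x}_i)ds$ lie in $\mathcal V_a:=\{\psi\in C^2(\mathbb T,(0,\infty)):|(\log\psi)'|<a\}$ and satisfy $\theta_b(\rho_{\hat{\boldsymbol x}_i},\rho_{\hat{\boldsymbol x}'_i})\le L|x_j-x'_j|$ when $\hat{\boldsymbol x}_i,\hat{\boldsymbol x}'_i$ differ only in coordinate $j$, where $\theta_b(\psi_1,\psi_2)=\log\beta_b(\psi_1,\psi_2)+\log\beta_b(\psi_2,\psi_1)$, $\beta_b(\psi_1,\psi_2)=\inf\{t>0:t\psi_1-\psi_2\in\mathcal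 V_b\}$. $\mu_{(x_{i_1},\dots,x_{i_m})}$ is the conditional probability measure of $\mu$ on the torus of the remaining coordinates when coordinates $i_1,\dots,i_m$ are fixed to the given values; $\boldsymbol\Pi_{[i_{k+1},\dots,i_N]}$ is the marginal on coordinates $i_{k+1},\dots,i_N$. $\mathrm{Osc}_j\psi:=\sup\{|\psi(x_j;\hat{\boldsymbol x}_j)-\psi(x'_j;\hat{\boldsymbol x}_j)|\}$, $\mathrm{Osc}\,\psi:=\max_j\mathrm{Osc}_j\psi$, $\mathcal O_\alpha(\mathbb T^m):=\{\psi\in L^1:\mathrm{Osc}_j\psi\le\alpha\ \forall j\}$. $B(k):=\sup\int_{\mathbb T^{N-k}}\psi\,d[\mu_{(x_{i_1},\dots,x_{i_j},\dots,x_{i_k})}-\mu_{(x_{i_1},\dots,x'_{i_j},\dots,x_{i_k})}]$ over $j\in[1,k]$, $\psi\in\mathcal O_1(\mathbb T^{N-k})$, distinct $i_1,\dots,i_k$ and points $x_{i_1},\dots,x_{i_k},x'_{i_j}\in\mathbb T$. *)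

theory Defs
  imports "HOL-Probability.Probability_Measure"
begin

text \<open>The circle T = R/Z: functions on T are 1-periodic functions on the reals;
  points of T are represented by reals in [0,1); Lebesgue measure on T is
  Lebesgue measure on [0,1).\<close>

definition T_meas :: "real measure" where
  "T_meas = restrict_space lborel {0..<1}"

definition tdist :: "real \<Rightarrow> real \<Rightarrow> real" where
  "tdist s t = Inf {\<bar>s - t - real_of_int m\<bar> | m. True}"

definition C2 :: "('a::real_normed_vector \<Rightarrow> real) \<Rightarrow> bool" where
  "C2 f \<longleftrightarrow> (\<exists>(f' :: 'a \<Rightarrow> ('a \<Rightarrow>\<^sub>L real)) (f'' :: 'a \<Rightarrow> ('a \<Rightarrow>\<^sub>L ('a \<Rightarrow>\<^sub>L real))).
      (\<forall>x. (f has_derivative blinfun_apply (f' x)) (at x)) \<and>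
      (\<forall>x. (f' has_derivative blinfun_apply (f'' x)) (at x)) \<and>
      continuous_on UNIV f'')"

definition V :: "real \<Rightarrow> (real \<Rightarrow> real) set" where
  "V a = {\<psi>. (\<forall>t. \<psi> (t + 1) = \<psi> t) \<and> (\<forall>t. \<psi> t > 0) \<and> C2 \<psi> \<and>
              (\<forall>t. \<bar>deriv (\<lambda>s. ln (\<psi> s)) t\<bar> < a)}"

definition beta_set :: "real \<Rightarrow> (real \<Rightarrow> real) \<Rightarrow> (real \<Rightarrow> real) \<Rightarrow> real set" where
  "beta_set b \<psi>1 \<psi>2 = {t. t > 0 \<and> (\<lambda>s. t * \<psi>1 s - \<psi>2 s) \<in> V b}"

definition theta :: "real \<Rightarrow> (real \<Rightarrow> real) \<Rightarrow> (real \<Rightarrow> real) \<Rightarrow> ereal" where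
  "theta b \<psi>1 \<psi>2 =
     (if beta_set b \<psi>1 \<psi>2 \<noteq> {} \<and> beta_set b \<psi>2 \<psi>1 \<noteq> {}
      then ereal (ln (Inf (beta_set b \<psi>1 \<psi>2)) + ln (Inf (beta_set b \<psi>2 \<psi>1)))
      else \<infinity>)"

text \<open>Densities on T^N, N = CARD('n), as functions of all coordinates, 1-periodic in each.
  Conditional density of rho in coordinate i, other coordinates given by x.\<close>
definition condd :: "(('n \<Rightarrow> real) \<Rightarrow> real) \<Rightarrow> 'n \<Rightarrow> ('n \<Rightarrow> real) \<Rightarrow> real \<Rightarrow> real" where
  "condd \<rho> i x = (\<lambda>s. \<rho> (x(i := s)) / (\<integral>u. \<rho> (x(i := u)) \<partial>T_meas))"

text \<open>The class M_{a,b,L} (stated for the density rho of mu).\<close>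
definition M :: "real \<Rightarrow> real \<Rightarrow> real \<Rightarrow> (('n::finite \<Rightarrow> real) \<Rightarrow> real) set" where
  "M a b L = {\<rho>. (\<forall>x i. \<rho> (x(i := x i + 1)) = \<rho> x) \<and> (\<forall>x. \<rho> x > 0) \<and>
                 C2 (\<lambda>v::real^'n. \<rho> (vec_nth v)) \<and>
                 (\<forall>i x. condd \<rho> i x \<in> V a) \<and>
                 (\<forall>i j x t. j \<noteq> i \<longrightarrow>
                     theta b (condd \<rho> i x) (condd \<rho> i (x(j := t))) \<le> ereal (L * tdist (x j) t))}"

definition TP :: "'n set \<Rightarrow> ('n \<Rightarrow> real) measure" where
  "TP R = PiM R (\<lambda>_. T_meas)"

definition muT :: "(('n \<Rightarrow> real) \<Rightarrow> real) \<Rightarrow> ('n \<Rightarrow> real) measure" where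
  "muT \<rho> = density (TP UNIV) (\<lambda>y. ennreal (\<rho> y))"

text \<open>Conditional probability measure of mu on the torus of the coordinates outside F,
  when the coordinates in F are fixed to the values x i (i in F).\<close>
definition cond :: "(('n \<Rightarrow> real) \<Rightarrow> real) \<Rightarrow> 'n set \<Rightarrow> ('n \<Rightarrow> real) \<Rightarrow> ('n \<Rightarrow> real) measure" where
  "cond \<rho> F x = density (TP (- F))
     (\<lambda>y. ennreal (\<rho> (merge F (- F) (x, y)) / (\<integral>z. \<rho> (merge F (- F) (x, z)) \<partial>TP (- F))))"

definition marg :: "'n set \<Rightarrow> ('n \<Rightarrow> real) measure \<Rightarrow> ('n \<Rightarrow> real) measure" where
  "marg R \<nu> = distr \<nu> (TP R) (\<lambda>y. restrict y R)"

definition Osc_j :: "'n set \<Rightarrow> 'n \<Rightarrow> (('n \<Rightarrow> real) \<Rightarrow> real) \<Rightarrow> ereal" where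
  "Osc_j R j \<psi> = Sup {ereal \<bar>\<psi> y - \<psi> (y(j := s))\<bar> | y s.
       y \<in> PiE R (\<lambda>_. {0..<1}) \<and> s \<in> {0..<1}}"

text \<open>Osc = max_j Osc_j (taken as 0 for the zero-dimensional torus).\<close>
definition Osc :: "'n set \<Rightarrow> (('n \<Rightarrow> real) \<Rightarrow> real) \<Rightarrow> ereal" where
  "Osc R \<psi> = Sup ({0} \<union> (\<lambda>j. Osc_j R j \<psi>) ` R)"

definition Ocl :: "real \<Rightarrow> 'n set \<Rightarrow> (('n \<Rightarrow> real) \<Rightarrow> real) set" where
  "Ocl \<alpha> R = {\<psi>. integrable (TP R) \<psi> \<and> (\<forall>j\<in>R. Osc_j R j \<psi> \<le> ereal \<alpha>)}"

text \<open>B(k): sup over sets F = {i_1..i_k} of k distinct indices, an index c = i_j in F,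
  points x_{i} (i in F) and x'_{i_j} in T, and psi in O_1(T^{N-k}).\<close>
definition B :: "(('n::finite \<Rightarrow> real) \<Rightarrow> real) \<Rightarrow> nat \<Rightarrow> ereal" where
  "B \<rho> k = Sup {ereal ((\<integral>y. \<psi> y \<partial>cond \<rho> F x) - (\<integral>y. \<psi> y \<partial>cond \<rho> F (x(c := t))))
       | F c x t \<psi>. card F = k \<and> c \<in> F \<and> (\<forall>i\<in>F. x i \<in> {0..<1}) \<and> t \<in> {0..<1} \<and>
                    \<psi> \<in> Ocl 1 (- F)}"

end

theory Submission
  imports Defs "HOL-Probability.Probability"
begin


lemma T_prob: "prob_space T_meas"
  unfolding T_meas_def
  by (rule prob_spaceI) (simp add: emeasure_restrict_space)

lemma space_T: "space T_meas = {0..<1}"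
  unfolding T_meas_def by (simp add: space_restrict_space)

lemma TP_prob: "prob_space (TP S)"
  unfolding TP_def by (rule prob_space_PiM) (rule T_prob)

lemma space_TP: "space (TP S) = PiE S (\<lambda>_. {0..<1})"
  unfolding TP_def by (simp add: space_PiM space_T)

lemma meas_T_id[measurable]: "(\<lambda>s. s) \<in> borel_measurable T_meas"
  unfolding T_meas_def by (rule measurable_restrict_space1) simp

lemma psf: "product_sigma_finite (\<lambda>_. T_meas)"
  unfolding product_sigma_finite_def
  using T_prob prob_space_imp_sigma_finite by blast

lemma coord_meas: "(\<lambda>z. z i) \<in> borel_measurable (TP S)" if "i \<in> S"
  unfolding TP_def using that
  using measurable_compose[OF measurable_component_singleton[OF that] meas_T_id] by simp

lemma vn: "vec_nth (\<chi> i. y i) = y" by (rule ext) simp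

lemma rho_cont:
  fixes \<rho> :: "('n::finite \<Rightarrow> real) \<Rightarrow> real"
  assumes "C2 (\<lambda>v::real^'n. \<rho> (vec_nth v))"
  shows "continuous_on UNIV (\<lambda>v::real^'n. \<rho> (vec_nth v))" "continuous_on UNIV \<rho>"
proof -
  let ?g = "\<lambda>v::real^'n. \<rho> (vec_nth v)"
  from assms obtain f' :: "(real^'n) \<Rightarrow> ((real^'n) \<Rightarrow>\<^sub>L real)" where
    d: "\<And>x. (?g has_derivative blinfun_apply (f' x)) (at x)"
    unfolding C2_def by blast
  show g: "continuous_on UNIV ?g"
    using d has_derivative_continuous continuous_at_imp_continuous_on by blast
  have v: "continuous_on UNIV (\<lambda>y::'n\<Rightarrow>real. \<chi> i. y i)"
    by (intro continuous_on_vec_lambda continuous_on_product_coordinates)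
  have "continuous_on UNIV (\<lambda>y::'n\<Rightarrow>real. ?g (\<chi> i. y i))"
    using continuous_on_compose2[OF g v] by simp
  moreover have "(\<lambda>y::'n\<Rightarrow>real. ?g (\<chi> i. y i)) = \<rho>"
    by (rule ext) (simp add: vn)
  ultimately show "continuous_on UNIV \<rho>" by metis
qed

lemma rho_bounds:
  fixes \<rho> :: "('n::finite \<Rightarrow> real) \<Rightarrow> real"
  assumes "C2 (\<lambda>v::real^'n. \<rho> (vec_nth v))" "\<And>y. \<rho> y > 0"
  shows "\<exists>m Mx. 0 < m \<and> (\<forall>y. (\<forall>i. y i \<in> {0..1}) \<longrightarrow> m \<le> \<rho> y \<and> \<rho> y \<le> Mx)"
proof -
  let ?g = "\<lambda>v::real^'n. \<rho> (vec_nth v)"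
  have g: "continuous_on (cbox 0 1) ?g"
    using rho_cont(1)[OF assms(1)] continuous_on_subset by blast
  have "(0::real^'n) \<in> cbox 0 1" by (simp add: mem_box_cart)
  then have ne: "cbox (0::real^'n) 1 \<noteq> {}" by blast
  obtain a where a: "a \<in> cbox 0 1" "\<And>y. y \<in> cbox 0 1 \<Longrightarrow> ?g a \<le> ?g y"
    using continuous_attains_inf[OF compact_cbox ne g] by blast
  obtain b where b: "b \<in> cbox 0 1" "\<And>y. y \<in> cbox 0 1 \<Longrightarrow> ?g y \<le> ?g b"
    using continuous_attains_sup[OF compact_cbox ne g] by blast
  show ?thesis
  proof (intro exI conjI allI impI)
    show "0 < ?g a" using assms(2) by simp
    fix y :: "'n \<Rightarrow> real" assume y: "\<forall>i. y i \<in> {0..1}"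
    have "(\<chi> i. y i) \<in> cbox 0 1" using y by (simp add: mem_box_cart)
    then show "?g a \<le> \<rho> y" "\<rho> y \<le> ?g b" using a(2)[of "\<chi> i. y i"] b(2)[of "\<chi> i. y i"] by (auto simp: vn)
  qed
qed

lemma rho_meas:
  fixes \<rho> :: "('n::finite \<Rightarrow> real) \<Rightarrow> real"
  assumes "C2 (\<lambda>v::real^'n. \<rho> (vec_nth v))"
    and "\<And>i. (\<lambda>w. f w i) \<in> borel_measurable MM"
  shows "(\<lambda>w. \<rho> (f w)) \<in> borel_measurable MM"
proof -
  have "f \<in> borel_measurable MM" by (rule measurable_coordinatewise_then_product) (rule assms(2))
  moreover have "\<rho> \<in> borel_measurable borel"
    using rho_cont(2)[OF assms(1)] by (rule borel_measurable_continuous_onI)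
  ultimately show ?thesis using measurable_compose by blast
qed



lemma int_bound_prob:
  assumes "prob_space MM" "integrable MM f" "\<And>x. x \<in> space MM \<Longrightarrow> \<bar>f x\<bar> \<le> (C::real)"
  shows "\<bar>\<integral>x. f x \<partial>MM\<bar> \<le> C"
proof -
  interpret prob_space MM by fact
  have "\<bar>\<integral>x. f x \<partial>MM\<bar> \<le> (\<integral>x. \<bar>f x\<bar> \<partial>MM)" by (rule integral_abs_bound)
  also have "\<dots> \<le> C" using assms by (intro integral_le_const) auto
  finally show ?thesis .
qed

lemma bounded_integrable:
  assumes "prob_space MM" "f \<in> borel_measurable MM" "\<And>x. x \<in> space MM \<Longrightarrow> \<bar>f x\<bar> \<le> (C::real)"
  shows "integrable MM f"
proof -
  interpret prob_space MM by fact
  show ?thesis using assms by (intro integrable_const_bound[where B=C]) auto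
qed

lemma merge_eq:
  assumes "c \<notin> G" "G \<union> insert c R = UNIV" "c \<notin> R"
  shows "merge G (-G) (x, merge {c} R (u, z)) = merge (insert c G) R (x(c := u c), z)"
  using assms by (auto simp: merge_def fun_eq_iff)

lemma fold_lemma:
  fixes \<rho> g :: "('n::finite \<Rightarrow> real) \<Rightarrow> real"
  assumes C2: "C2 (\<lambda>v::real^'n. \<rho> (vec_nth v))" and pos: "\<And>y. \<rho> y > 0"
    and bd: "\<And>y. (\<forall>i. y i \<in> {0..1}) \<Longrightarrow> \<rho> y \<le> Mx"
    and dis: "c \<notin> G" "c \<notin> R" "G \<inter> R = {}" "G \<union> insert c R = UNIV"
    and gm: "g \<in> borel_measurable (TP R)" and gb: "\<And>z. z \<in> space (TP R) \<Longrightarrow> \<bar>g z\<bar> \<le> Cg"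
    and x: "\<forall>i\<in>G. x i \<in> {0..<1}"
  shows "(\<integral>y. g (restrict y R) * \<rho> (merge G (-G) (x,y)) \<partial>TP (-G))
          = (\<integral>s. (\<integral>z. g z * \<rho> (merge (insert c G) R (x(c:=s), z)) \<partial>TP R) \<partial>T_meas)"
    and "integrable T_meas (\<lambda>s. (\<integral>z. g z * \<rho> (merge (insert c G) R (x(c:=s), z)) \<partial>TP R))"
proof -
  interpret P: product_sigma_finite "\<lambda>_. T_meas" by (rule psf)
  have mG: "-G = {c} \<union> R" using dis by auto
  define f where "f y = g (restrict y R) * \<rho> (merge G (-G) (x,y))" for y
  define h where "h s = (\<integral>z. g z * \<rho> (merge (insert c G) R (x(c:=s), z)) \<partial>TP R)" for s
  have Cg0: "0 \<le> Cg" using gb[of "restrict (\<lambda>_. 0) R"] by (auto simp: space_TP)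
  have Mx0: "0 \<le> Mx" using bd[of "\<lambda>_. 0"] pos[of "\<lambda>_. 0"] by simp
  have fm: "f \<in> borel_measurable (TP (-G))"
  proof -
    have "(\<lambda>y. g (restrict y R)) \<in> borel_measurable (TP (-G))"
    proof -
      have "R \<subseteq> -G" using dis by auto
      then show ?thesis
        using measurable_compose[OF measurable_restrict_subset gm[unfolded TP_def]]
        unfolding TP_def by blast
    qed
    moreover have "(\<lambda>y. \<rho> (merge G (-G) (x,y))) \<in> borel_measurable (TP (-G))"
    proof (rule rho_meas[OF C2])
      fix i
      show "(\<lambda>y. merge G (-G) (x,y) i) \<in> borel_measurable (TP (-G))"
        by (cases "i \<in> G") (auto simp: merge_def intro: coord_meas)
    qed
    ultimately show ?thesis unfolding f_def by measurable
  qed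
  have fb: "\<bar>f y\<bar> \<le> Cg * Mx" if "y \<in> space (TP (-G))" for y
  proof -
    have "R \<subseteq> -G" using dis by auto
    then have "restrict y R \<in> space (TP R)" using that by (auto simp: space_TP PiE_def Pi_def)
    then have "\<bar>g (restrict y R)\<bar> \<le> Cg" by (rule gb)
    moreover have "\<rho> (merge G (-G) (x,y)) \<le> Mx"
      using that x by (intro bd) (auto simp: merge_def space_TP PiE_def Pi_def)
    moreover have "0 < \<rho> (merge G (-G) (x,y))" by (rule pos)
    ultimately show ?thesis unfolding f_def abs_mult
      by (intro mult_mono) auto
  qed
  have fi: "integrable (TP (-G)) f"
    by (rule bounded_integrable[OF TP_prob fm fb])
  have hm: "h \<in> borel_measurable T_meas"
  proof -
    interpret R: prob_space "TP R" by (rule TP_prob)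
    have "(\<lambda>w. g (snd w) * \<rho> (merge (insert c G) R (x(c:=fst w), snd w))) \<in> borel_measurable (T_meas \<Otimes>\<^sub>M TP R)"
    proof -
      have "(\<lambda>w. g (snd w)) \<in> borel_measurable (T_meas \<Otimes>\<^sub>M TP R)"
        by (rule measurable_compose[OF measurable_snd gm])
      moreover have "(\<lambda>w. \<rho> (merge (insert c G) R (x(c:=fst w), snd w))) \<in> borel_measurable (T_meas \<Otimes>\<^sub>M TP R)"
      proof (rule rho_meas[OF C2])
        fix i
        show "(\<lambda>w. merge (insert c G) R (x(c:=fst w), snd w) i) \<in> borel_measurable (T_meas \<Otimes>\<^sub>M TP R)"
        proof (cases "i = c")
          case True then show ?thesis
            using measurable_compose[OF measurable_fst meas_T_id] by (simp add: merge_def)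
        next
          case False then show ?thesis
            using measurable_compose[OF measurable_snd coord_meas[of i R]]
            by (cases "i \<in> G"; cases "i \<in> R") (auto simp: merge_def)
        qed
      qed
      ultimately show ?thesis by measurable
    qed
    then have "(\<lambda>s. \<integral>z. g z * \<rho> (merge (insert c G) R (x(c:=s), z)) \<partial>TP R) \<in> borel_measurable T_meas"
      by (intro R.borel_measurable_lebesgue_integral) (simp add: case_prod_beta')
    then show ?thesis unfolding h_def .
  qed
  have hb: "\<bar>h s\<bar> \<le> Cg * Mx" if "s \<in> space T_meas" for s
  proof -
    have im: "(\<lambda>z. g z * \<rho> (merge (insert c G) R (x(c:=s), z))) \<in> borel_measurable (TP R)"
    proof -
      have "(\<lambda>z. \<rho> (merge (insert c G) R (x(c:=s), z))) \<in> borel_measurable (TP R)"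
      proof (rule rho_meas[OF C2])
        fix i
        show "(\<lambda>z. merge (insert c G) R (x(c:=s), z) i) \<in> borel_measurable (TP R)"
          by (cases "i \<in> insert c G"; cases "i \<in> R") (auto simp: merge_def intro: coord_meas)
      qed
      then show ?thesis using gm by measurable
    qed
    have ib: "\<bar>g z * \<rho> (merge (insert c G) R (x(c:=s), z))\<bar> \<le> Cg * Mx" if "z \<in> space (TP R)" for z
    proof -
      have "\<rho> (merge (insert c G) R (x(c:=s), z)) \<le> Mx"
        using that x \<open>s \<in> space T_meas\<close> dis by (intro bd) (auto simp: merge_def space_TP space_T PiE_def Pi_def)
      moreover have "0 < \<rho> (merge (insert c G) R (x(c:=s), z))" by (rule pos)
      ultimately show ?thesis using gb[OF that] unfolding abs_mult
        by (intro mult_mono) auto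
    qed
    show ?thesis unfolding h_def
      by (rule int_bound_prob[OF TP_prob bounded_integrable[OF TP_prob im ib] ib])
  qed
  show "integrable T_meas (\<lambda>s. (\<integral>z. g z * \<rho> (merge (insert c G) R (x(c:=s), z)) \<partial>TP R))"
    using bounded_integrable[OF T_prob hm hb] unfolding h_def .
  have "(\<integral>y. f y \<partial>TP (-G)) = (\<integral>u. (\<integral>z. f (merge {c} R (u, z)) \<partial>TP R) \<partial>TP {c})"
    using P.product_integral_fold[of "{c}" R f] fi dis unfolding TP_def mG by auto
  also have "\<dots> = (\<integral>u. h (u c) \<partial>TP {c})"
  proof -
    have eq: "(\<integral>z. f (merge {c} R (u, z)) \<partial>TP R) = h (u c)" for u
      unfolding h_def
    proof (rule Bochner_Integration.integral_cong[OF refl])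
      fix z assume z: "z \<in> space (TP R)"
      have "restrict (merge {c} R (u, z)) R = z"
        using dis z by (simp add: space_TP)
      then show "f (merge {c} R (u, z)) = g z * \<rho> (merge (insert c G) R (x(c := u c), z))"
        unfolding f_def using merge_eq[of c G R x u z] dis by simp
    qed
    show ?thesis by (simp only: eq)
  qed
  also have "\<dots> = (\<integral>s. h s \<partial>T_meas)"
    unfolding TP_def by (rule P.product_integral_singleton[OF hm])
  finally show "(\<integral>y. g (restrict y R) * \<rho> (merge G (-G) (x,y)) \<partial>TP (-G))
          = (\<integral>s. (\<integral>z. g z * \<rho> (merge (insert c G) R (x(c:=s), z)) \<partial>TP R) \<partial>T_meas)"
    unfolding f_def h_def .
qed



lemma meas_merge_rho:
  fixes \<rho> :: "('n::finite \<Rightarrow> real) \<Rightarrow> real"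
  assumes C2: "C2 (\<lambda>v::real^'n. \<rho> (vec_nth v))"
  shows "(\<lambda>z. \<rho> (merge F (-F) (x,z))) \<in> borel_measurable (TP (-F))"
proof (rule rho_meas[OF C2])
  fix i
  show "(\<lambda>z. merge F (-F) (x,z) i) \<in> borel_measurable (TP (-F))"
    by (cases "i \<in> F") (auto simp: merge_def intro: coord_meas)
qed

lemma cond_int:
  fixes \<rho> \<psi> :: "('n::finite \<Rightarrow> real) \<Rightarrow> real"
  assumes C2: "C2 (\<lambda>v::real^'n. \<rho> (vec_nth v))" and pos: "\<And>y. \<rho> y > 0"
    and pm: "\<psi> \<in> borel_measurable (TP (-F))"
  shows "(\<integral>y. \<psi> y \<partial>cond \<rho> F x) =
     (\<integral>z. \<psi> z * \<rho> (merge F (-F) (x,z)) \<partial>TP (-F)) / (\<integral>z. \<rho> (merge F (-F) (x,z)) \<partial>TP (-F))"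
proof -
  let ?Z = "\<integral>z. \<rho> (merge F (-F) (x,z)) \<partial>TP (-F)"
  have rm: "(\<lambda>z. \<rho> (merge F (-F) (x,z))) \<in> borel_measurable (TP (-F))"
    by (rule meas_merge_rho[OF C2])
  have Z0: "0 \<le> ?Z" using pos by (intro integral_nonneg_AE) (auto intro: less_imp_le)
  have "(\<integral>y. \<psi> y \<partial>cond \<rho> F x) =
        (\<integral>y. (\<rho> (merge F (-F) (x,y)) / ?Z) *\<^sub>R \<psi> y \<partial>TP (-F))"
    unfolding cond_def
    by (rule integral_density) (use pm rm Z0 pos in \<open>auto intro!: AE_I2 divide_nonneg_nonneg simp: less_imp_le[OF pos]\<close>)
  also have "\<dots> = (\<integral>y. \<psi> y * \<rho> (merge F (-F) (x,y)) / ?Z \<partial>TP (-F))"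
    by (simp add: mult.commute)
  also have "\<dots> = (\<integral>z. \<psi> z * \<rho> (merge F (-F) (x,z)) \<partial>TP (-F)) / ?Z"
    by (rule integral_divide_zero)
  finally show ?thesis .
qed

lemma marg_int:
  fixes \<rho> \<psi> :: "('n::finite \<Rightarrow> real) \<Rightarrow> real"
  assumes C2: "C2 (\<lambda>v::real^'n. \<rho> (vec_nth v))" and pos: "\<And>y. \<rho> y > 0"
    and pm: "\<psi> \<in> borel_measurable (TP R)" and RF: "R \<subseteq> -F"
  shows "(\<integral>y. \<psi> y \<partial>marg R (cond \<rho> F x)) =
     (\<integral>z. \<psi> (restrict z R) * \<rho> (merge F (-F) (x,z)) \<partial>TP (-F)) / (\<integral>z. \<rho> (merge F (-F) (x,z)) \<partial>TP (-F))"
proof -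
  have rm: "(\<lambda>y. restrict y R) \<in> measurable (TP (-F)) (TP R)"
    unfolding TP_def using RF by (rule measurable_restrict_subset)
  have "(\<integral>y. \<psi> y \<partial>marg R (cond \<rho> F x)) = (\<integral>y. \<psi> (restrict y R) \<partial>cond \<rho> F x)"
    unfolding marg_def by (rule integral_distr) (use rm pm in \<open>auto simp: cond_def\<close>)
  show ?thesis
    unfolding \<open>(\<integral>y. \<psi> y \<partial>marg R (cond \<rho> F x)) = (\<integral>y. \<psi> (restrict y R) \<partial>cond \<rho> F x)\<close>
    by (rule cond_int[OF C2 pos]) (rule measurable_compose[OF rm pm])
qed

lemma key_ineq:
  fixes A Z A' Z' :: "'a \<Rightarrow> real"
  assumes iA: "integrable MM A" and iZ: "integrable MM Z" and iA': "integrable MM A'" and iZ': "integrable MM Z'"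
    and Zp: "\<And>s. s \<in> space MM \<Longrightarrow> Z s > 0" and Z'p: "\<And>s. s \<in> space MM \<Longrightarrow> Z' s > 0"
    and IZ: "(\<integral>s. Z s \<partial>MM) > 0" and IZ': "(\<integral>s. Z' s \<partial>MM) > 0"
    and d1: "\<And>s. s \<in> space MM \<Longrightarrow> A s / Z s - A' s / Z' s \<le> \<beta>"
    and d2: "\<And>s s'. s \<in> space MM \<Longrightarrow> s' \<in> space MM \<Longrightarrow> A' s / Z' s - A' s' / Z' s' \<le> \<beta>"
  shows "(\<integral>s. A s \<partial>MM) / (\<integral>s. Z s \<partial>MM) - (\<integral>s. A' s \<partial>MM) / (\<integral>s. Z' s \<partial>MM) \<le> 2 * \<beta>"
proof -
  define q where "q = (\<integral>s. A s \<partial>MM) / (\<integral>s. Z s \<partial>MM) - 2 * \<beta>"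
  have qs: "q * Z' s' \<le> A' s'" if s': "s' \<in> space MM" for s'
  proof -
    let ?c = "A' s' / Z' s' + 2 * \<beta>"
    have "A s \<le> ?c * Z s" if s: "s \<in> space MM" for s
    proof -
      have "A s / Z s \<le> ?c" using d1[OF s] d2[OF s s'] by linarith
      then show ?thesis using Zp[OF s] by (simp add: pos_divide_le_eq)
    qed
    then have "(\<integral>s. A s \<partial>MM) \<le> (\<integral>s. ?c * Z s \<partial>MM)"
      by (intro integral_mono iA) (auto intro: iZ)
    also have "\<dots> = ?c * (\<integral>s. Z s \<partial>MM)" by simp
    finally have "(\<integral>s. A s \<partial>MM) / (\<integral>s. Z s \<partial>MM) \<le> ?c" using IZ by (simp add: pos_divide_le_eq)
    then have "q \<le> A' s' / Z' s'" unfolding q_def by linarith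
    then show ?thesis using Z'p[OF s'] by (simp add: le_divide_eq)
  qed
  have "q * (\<integral>s. Z' s \<partial>MM) = (\<integral>s. q * Z' s \<partial>MM)" by simp
  also have "\<dots> \<le> (\<integral>s. A' s \<partial>MM)"
    by (intro integral_mono iA') (auto intro: iZ' qs)
  finally have "q \<le> (\<integral>s. A' s \<partial>MM) / (\<integral>s. Z' s \<partial>MM)" using IZ' by (simp add: le_divide_eq)
  then show ?thesis unfolding q_def by linarith
qed



lemma osc_elem:
  assumes "j \<in> R" "y \<in> PiE R (\<lambda>_. {0..<1})" "s \<in> {0..<1}"
  shows "ereal \<bar>\<psi> y - \<psi> (y(j:=s))\<bar> \<le> Osc R \<psi>"
proof -
  have "ereal \<bar>\<psi> y - \<psi> (y(j:=s))\<bar> \<le> Osc_j R j \<psi>"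
    unfolding Osc_j_def using assms by (intro Sup_upper) blast
  also have "\<dots> \<le> Osc R \<psi>" unfolding Osc_def using assms(1) by (intro Sup_upper) blast
  finally show ?thesis .
qed

lemma osc_nonneg: "0 \<le> Osc R \<psi>"
  unfolding Osc_def by (intro Sup_upper) blast

lemma osc_diff:
  fixes \<psi> :: "('a \<Rightarrow> real) \<Rightarrow> real"
  assumes O: "Osc R \<psi> = ereal om" and fin: "finite R"
    and y: "y \<in> PiE R (\<lambda>_. {0..<1})" and y0: "y0 \<in> PiE R (\<lambda>_. {0..<1})"
  shows "\<bar>\<psi> y - \<psi> y0\<bar> \<le> real (card R) * om"
proof -
  have step: "\<bar>\<psi> w - \<psi> (w(a:=s))\<bar> \<le> om" if "a \<in> R" "w \<in> PiE R (\<lambda>_. {0..<1})" "s \<in> {0..<1}" for a w s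
    using osc_elem[OF that, of \<psi>] O by simp
  have "\<forall>y\<in>PiE R (\<lambda>_. {0..<1}). \<bar>\<psi> y - \<psi> (\<lambda>i. if i \<in> S then y0 i else y i)\<bar> \<le> real (card S) * om"
    if "S \<subseteq> R" for S
    using finite_subset[OF that fin] that
  proof (induction S rule: finite_induct)
    case empty then show ?case by simp
  next
    case (insert a S)
    show ?case
    proof
      fix y :: "'a \<Rightarrow> real" assume y: "y \<in> PiE R (\<lambda>_. {0..<1})"
      define w where "w = (\<lambda>i. if i \<in> S then y0 i else y i)"
      have w: "w \<in> PiE R (\<lambda>_. {0..<1})" using y y0 unfolding w_def by (auto simp: PiE_def Pi_def extensional_def)
      have e: "(\<lambda>i. if i \<in> insert a S then y0 i else y i) = w(a := y0 a)"
        unfolding w_def by auto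
      have a: "a \<in> R" using insert by auto
      have "\<bar>\<psi> y - \<psi> w\<bar> \<le> real (card S) * om" using insert y unfolding w_def by auto
      moreover have "\<bar>\<psi> w - \<psi> (w(a := y0 a))\<bar> \<le> om" using step[OF a w, of "y0 a"] y0 a by (auto simp: PiE_iff)
      ultimately show "\<bar>\<psi> y - \<psi> (\<lambda>i. if i \<in> insert a S then y0 i else y i)\<bar> \<le> real (card (insert a S)) * om"
        unfolding e using insert by (simp add: algebra_simps)
    qed
  qed
  from this[OF order_refl] y have "\<bar>\<psi> y - \<psi> (\<lambda>i. if i \<in> R then y0 i else y i)\<bar> \<le> real (card R) * om" by blast
  moreover have "(\<lambda>i. if i \<in> R then y0 i else y i) = y0" using y y0 by (auto simp: PiE_def extensional_def)
  ultimately show ?thesis by simp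
qed

lemma perm_facts:
  assumes bij: "bij_betw p {1..N} (UNIV::'n set)" and j: "1 \<le> j" "j \<le> k - 1" and k: "k \<le> N"
  shows "p k \<notin> p`{1..k-1}" "p k \<notin> p`{k+1..N}" "p`{1..k-1} \<inter> p`{k+1..N} = {}"
    "p`{1..k-1} \<union> insert (p k) (p`{k+1..N}) = UNIV" "card (insert (p k) (p`{1..k-1})) = k"
    "p j \<in> p`{1..k-1}" "p j \<noteq> p k"
proof -
  have inj: "inj_on p {1..N}" and surj: "p ` {1..N} = UNIV" using bij by (auto simp: bij_betw_def)
  have k2: "2 \<le> k" using j by linarith
  show "p k \<notin> p`{1..k-1}"
  proof
    assume "p k \<in> p`{1..k-1}"
    then obtain l where "l \<in> {1..k-1}" "p k = p l" by auto
    with inj k k2 show False by (auto dest: inj_onD)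
  qed
  show "p k \<notin> p`{k+1..N}"
  proof
    assume "p k \<in> p`{k+1..N}"
    then obtain l where "l \<in> {k+1..N}" "p k = p l" by auto
    with inj k k2 show False by (auto dest: inj_onD)
  qed
  show "p`{1..k-1} \<inter> p`{k+1..N} = {}"
  proof (rule ccontr)
    assume "p`{1..k-1} \<inter> p`{k+1..N} \<noteq> {}"
    then obtain l l' where ll: "l \<in> {1..k-1}" "l' \<in> {k+1..N}" "p l = p l'" by blast
    then have "l = l'" using k by (intro inj_onD[OF inj]) auto
    with ll show False by auto
  qed
  show "p`{1..k-1} \<union> insert (p k) (p`{k+1..N}) = UNIV"
  proof (rule set_eqI, rule iffI)
    fix i :: 'n assume "i \<in> UNIV"
    then obtain l where l: "l \<in> {1..N}" "i = p l" using surj by blast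
    show "i \<in> p`{1..k-1} \<union> insert (p k) (p`{k+1..N})"
    proof (cases "l < k")
      case True then show ?thesis using l by auto
    next
      case False then show ?thesis using l by (cases "l = k") auto
    qed
  qed simp
  have "{1..k} = insert k {1..k-1}" using k2 by auto
  then have "insert (p k) (p`{1..k-1}) = p`{1..k}" by simp
  moreover have "inj_on p {1..k}" using k by (intro inj_on_subset[OF inj]) auto
  ultimately show "card (insert (p k) (p`{1..k-1})) = k" by (simp add: card_image)
  show "p j \<in> p`{1..k-1}" using j by auto
  show "p j \<noteq> p k"
  proof
    assume "p j = p k"
    with inj j k k2 show False by (auto dest: inj_onD)
  qed
qed



theorem lemma5p3:
  fixes \<rho> :: "('n::finite \<Rightarrow> real) \<Rightarrow> real"
    and a b K :: real
    and p :: "nat \<Rightarrow> 'n"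
    and k j :: nat
    and x :: "'n \<Rightarrow> real"
    and t :: real
    and \<psi> :: "('n \<Rightarrow> real) \<Rightarrow> real"
  assumes inM: "\<rho> \<in> M a b (K / real CARD('n))"
    and prob: "prob_space (muT \<rho>)"
    and perm: "bij_betw p {1..CARD('n)} UNIV"
    and k: "1 \<le> k" "k \<le> CARD('n)"
    and j: "1 \<le> j" "j \<le> k - 1"
    and x: "\<forall>l\<in>{1..k-1}. x (p l) \<in> {0..<1}"
    and t: "t \<in> {0..<1}"
    and L1: "integrable (TP (p ` {k+1..CARD('n)})) \<psi>"
    and osc: "Osc (p ` {k+1..CARD('n)}) \<psi> < \<infinity>"
  shows "ereal ((\<integral>y. \<psi> y \<partial>marg (p ` {k+1..CARD('n)}) (cond \<rho> (p ` {1..k-1}) x))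
              - (\<integral>y. \<psi> y \<partial>marg (p ` {k+1..CARD('n)}) (cond \<rho> (p ` {1..k-1}) (x(p j := t)))))
         \<le> 2 * B \<rho> k * Osc (p ` {k+1..CARD('n)}) \<psi>"
proof -
  define F' where "F' = p`{1..k-1}"
  define c where "c = p k"
  define R where "R = p`{k+1..CARD('n)}"
  define F where "F = insert c F'"
  note pf = perm_facts[OF perm j k(2)]
  have cF': "c \<notin> F'" and cR: "c \<notin> R" and dis: "F' \<inter> R = {}" and un: "F' \<union> insert c R = UNIV"
    and cardF: "card F = k" and pjF': "p j \<in> F'" and pjc: "p j \<noteq> c"
    using pf unfolding F'_def c_def R_def F_def by auto
  have mF: "-F = R" using cF' cR dis un unfolding F_def by auto
  have RF': "R \<subseteq> -F'" using dis by auto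
  have FR: "\<forall>i. i \<in> F \<or> i \<in> R" using un unfolding F_def by auto
  have pos: "\<And>y. \<rho> y > 0" and C2: "C2 (\<lambda>v::real^'n. \<rho> (vec_nth v))" using inM by (auto simp: M_def)
  obtain m Mx where m: "0 < m" and mb: "\<And>y. (\<forall>i. y i \<in> {0..1}) \<Longrightarrow> m \<le> \<rho> y \<and> \<rho> y \<le> Mx"
    using rho_bounds[OF C2 pos] by blast
  have pm: "\<psi> \<in> borel_measurable (TP R)" using L1 unfolding R_def by auto
  have Oosc: "Osc R \<psi> < \<infinity>" using osc unfolding R_def .
  obtain om where O: "Osc R \<psi> = ereal om" and om0: "0 \<le> om"
    using Oosc osc_nonneg[of R \<psi>] by (cases "Osc R \<psi>") auto
  define y0 where "y0 = restrict (\<lambda>_. (0::real)) R"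
  have y0: "y0 \<in> space (TP R)" unfolding y0_def space_TP by auto
  define C\<psi> where "C\<psi> = \<bar>\<psi> y0\<bar> + real (card R) * om"
  have \<psi>b: "\<bar>\<psi> z\<bar> \<le> C\<psi>" if "z \<in> space (TP R)" for z
    using osc_diff[OF O finite, of z y0] that y0 unfolding C\<psi>_def space_TP by auto
  define x' where "x' = x(p j := t)"
  have xF': "\<forall>i\<in>F'. x i \<in> {0..<1}" using x unfolding F'_def by auto
  have x'F': "\<forall>i\<in>F'. x' i \<in> {0..<1}" using xF' t unfolding x'_def by auto

  have Zm: "(\<lambda>z. \<rho> (merge F R (X0,z))) \<in> borel_measurable (TP R)" for X0
    using meas_merge_rho[OF C2, of F X0] unfolding mF .
  have Zbd: "m \<le> \<rho> (merge F R (X0,z)) \<and> \<rho> (merge F R (X0,z)) \<le> Mx"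
    if "\<forall>i\<in>F. X0 i \<in> {0..<1}" "z \<in> space (TP R)" for X0 z
  proof (rule mb, rule allI)
    fix i show "merge F R (X0,z) i \<in> {0..1}"
      using that FR[rule_format, of i] by (auto simp: merge_def space_TP PiE_iff)
  qed
  have Zint: "integrable (TP R) (\<lambda>z. \<rho> (merge F R (X0,z)))" if "\<forall>i\<in>F. X0 i \<in> {0..<1}" for X0
    using Zbd[OF that] pos by (intro bounded_integrable[OF TP_prob Zm, of _ Mx]) (auto simp: less_imp_le)
  have Zpos: "m \<le> (\<integral>z. \<rho> (merge F R (X0,z)) \<partial>TP R)" if "\<forall>i\<in>F. X0 i \<in> {0..<1}" for X0
    using Zbd[OF that] by (intro prob_space.integral_ge_const[OF TP_prob Zint[OF that]] AE_I2) auto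
  have condeq: "(\<integral>y. \<psi> y \<partial>cond \<rho> F X0) =
     (\<integral>z. \<psi> z * \<rho> (merge F R (X0,z)) \<partial>TP R) / (\<integral>z. \<rho> (merge F R (X0,z)) \<partial>TP R)" for X0
    using cond_int[OF C2 pos, of \<psi> F X0] pm unfolding mF by simp

  define A where "A X s = (\<integral>z. \<psi> z * \<rho> (merge F R (X(c:=s), z)) \<partial>TP R)" for X s
  define Z where "Z X s = (\<integral>z. \<rho> (merge F R (X(c:=s), z)) \<partial>TP R)" for X s

  have G: "(\<integral>y. \<psi> y \<partial>marg R (cond \<rho> F' X)) = (\<integral>s. A X s \<partial>T_meas) / (\<integral>s. Z X s \<partial>T_meas)"
     "integrable T_meas (A X)" "integrable T_meas (Z X)"
     "\<And>s. s \<in> space T_meas \<Longrightarrow> m \<le> Z X s" "m \<le> (\<integral>s. Z X s \<partial>T_meas)"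
     "\<And>s. s \<in> space T_meas \<Longrightarrow> (\<integral>y. \<psi> y \<partial>cond \<rho> F (X(c:=s))) = A X s / Z X s"
    if XF: "\<forall>i\<in>F'. X i \<in> {0..<1}" for X
  proof -
    have bd: "\<And>y. (\<forall>i. y i \<in> {0..1}) \<Longrightarrow> \<rho> y \<le> Mx" using mb by blast
    note f1 = fold_lemma[OF C2 pos bd cF' cR dis un pm \<psi>b XF]
    have one: "\<And>z. z \<in> space (TP R) \<Longrightarrow> \<bar>(\<lambda>_. 1::real) z\<bar> \<le> 1" by simp
    have onem: "(\<lambda>_. 1::real) \<in> borel_measurable (TP R)" by simp
    note f2 = fold_lemma[OF C2 pos bd cF' cR dis un onem one XF]
    have f2': "(\<integral>y. \<rho> (merge F' (-F') (X,y)) \<partial>TP (-F')) = (\<integral>s. Z X s \<partial>T_meas)"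
      "integrable T_meas (Z X)"
      using f2 unfolding Z_def F_def by simp_all
    show "(\<integral>y. \<psi> y \<partial>marg R (cond \<rho> F' X)) = (\<integral>s. A X s \<partial>T_meas) / (\<integral>s. Z X s \<partial>T_meas)"
      using marg_int[OF C2 pos pm RF', of X] f1(1) f2'(1) unfolding A_def F_def by simp
    show "integrable T_meas (A X)" using f1(2) unfolding A_def F_def by simp
    show "integrable T_meas (Z X)" by (rule f2'(2))
    have XsF: "\<forall>i\<in>F. (X(c:=s)) i \<in> {0..<1}" if "s \<in> space T_meas" for s
      using XF that unfolding F_def space_T by auto
    show Zs: "m \<le> Z X s" if "s \<in> space T_meas" for s
      unfolding Z_def by (rule Zpos[OF XsF[OF that]])
    show "m \<le> (\<integral>s. Z X s \<partial>T_meas)"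
      using Zs by (intro prob_space.integral_ge_const[OF T_prob f2'(2)] AE_I2) auto
    show "(\<integral>y. \<psi> y \<partial>cond \<rho> F (X(c:=s))) = A X s / Z X s" if "s \<in> space T_meas" for s
      unfolding A_def Z_def by (rule condeq)
  qed
  note Gx = G[OF xF'] and Gx' = G[OF x'F']

  have main: "(\<integral>y. \<psi> y \<partial>marg R (cond \<rho> F' x)) - (\<integral>y. \<psi> y \<partial>marg R (cond \<rho> F' x')) \<le> 2 * \<beta>"
    if Db: "\<And>X0 c0 t0. \<forall>i\<in>F. X0 i \<in> {0..<1} \<Longrightarrow> c0 \<in> F \<Longrightarrow> t0 \<in> {0..<1} \<Longrightarrow>
        (\<integral>y. \<psi> y \<partial>cond \<rho> F X0) - (\<integral>y. \<psi> y \<partial>cond \<rho> F (X0(c0:=t0))) \<le> \<beta>" for \<beta>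
  proof -
    have XsF: "\<forall>i\<in>F. (X(c:=s)) i \<in> {0..<1}" if "s \<in> space T_meas" "\<forall>i\<in>F'. X i \<in> {0..<1}" for s X
      using that unfolding F_def space_T by auto
    show ?thesis unfolding Gx(1) Gx'(1)
    proof (rule key_ineq[OF Gx(2,3) Gx'(2,3)])
      show "0 < Z x s" "0 < Z x' s" if "s \<in> space T_meas" for s
        using Gx(4)[OF that] Gx'(4)[OF that] m by auto
      show "0 < (\<integral>s. Z x s \<partial>T_meas)" "0 < (\<integral>s. Z x' s \<partial>T_meas)" using Gx(5) Gx'(5) m by auto
      show "A x s / Z x s - A x' s / Z x' s \<le> \<beta>" if s: "s \<in> space T_meas" for s
      proof -
        have e: "x'(c:=s) = (x(c:=s))(p j := t)" unfolding x'_def using pjc by (simp add: fun_upd_twist)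
        have "p j \<in> F" using pjF' unfolding F_def by auto
        then have "(\<integral>y. \<psi> y \<partial>cond \<rho> F (x(c:=s))) - (\<integral>y. \<psi> y \<partial>cond \<rho> F ((x(c:=s))(p j:=t))) \<le> \<beta>"
          by (rule Db[OF XsF[OF s xF'] _ t])
        moreover note Gx(6)[OF s]
        moreover note Gx'(6)[OF s, unfolded e]
        ultimately show ?thesis by linarith
      qed
      show "A x' s / Z x' s - A x' s' / Z x' s' \<le> \<beta>" if s: "s \<in> space T_meas" "s' \<in> space T_meas" for s s'
      proof -
        have "c \<in> F" unfolding F_def by auto
        moreover have "s' \<in> {0..<1}" using s space_T by auto
        ultimately have "(\<integral>y. \<psi> y \<partial>cond \<rho> F (x'(c:=s))) - (\<integral>y. \<psi> y \<partial>cond \<rho> F ((x'(c:=s))(c:=s'))) \<le> \<beta>"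
          by (intro Db[OF XsF[OF s(1) x'F']])
        moreover note Gx'(6)[OF s(1)]
        moreover note Gx'(6)[OF s(2)]
        moreover have "(x'(c:=s))(c:=s') = x'(c:=s')" by simp
        ultimately show ?thesis by (metis (no_types, lifting))
      qed
    qed
  qed

  have goalR: "ereal ((\<integral>y. \<psi> y \<partial>marg R (cond \<rho> F' x)) - (\<integral>y. \<psi> y \<partial>marg R (cond \<rho> F' x')))
         \<le> 2 * B \<rho> k * Osc R \<psi>"
  proof (cases "om = 0")
    case True
    have const: "(\<integral>y. \<psi> y \<partial>cond \<rho> F X0) = \<psi> y0" if X0: "\<forall>i\<in>F. X0 i \<in> {0..<1}" for X0
    proof -
      have "(\<integral>z. \<psi> z * \<rho> (merge F R (X0,z)) \<partial>TP R) = (\<integral>z. \<psi> y0 * \<rho> (merge F R (X0,z)) \<partial>TP R)"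
      proof (rule Bochner_Integration.integral_cong[OF refl])
        fix z assume "z \<in> space (TP R)"
        then have "\<psi> z = \<psi> y0" using osc_diff[OF O finite, of z y0] y0 True by (auto simp: space_TP)
        then show "\<psi> z * \<rho> (merge F R (X0,z)) = \<psi> y0 * \<rho> (merge F R (X0,z))" by simp
      qed
      then show ?thesis unfolding condeq using Zpos[OF X0] m by simp
    qed
    have L0: "(\<integral>y. \<psi> y \<partial>marg R (cond \<rho> F' x)) - (\<integral>y. \<psi> y \<partial>marg R (cond \<rho> F' x')) \<le> 2 * 0"
    proof (rule main)
      fix X0 :: "'n \<Rightarrow> real" and c0 and t0 :: real assume "\<forall>i\<in>F. X0 i \<in> {0..<1}" "c0 \<in> F" "t0 \<in> {0..<1}"
      moreover then have "\<forall>i\<in>F. (X0(c0:=t0)) i \<in> {0..<1}" by auto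
      ultimately show "(\<integral>y. \<psi> y \<partial>cond \<rho> F X0) - (\<integral>y. \<psi> y \<partial>cond \<rho> F (X0(c0:=t0))) \<le> 0"
        using const by simp
    qed
    have eq0: "2 * B \<rho> k * Osc R \<psi> = 0" using O True by (simp add: zero_ereal_def[symmetric])
    show ?thesis unfolding eq0 using L0 by (simp add: zero_ereal_def[symmetric])
  next
    case False
    then have om: "0 < om" using om0 by simp
    have Ocl: "(\<lambda>z. \<psi> z / om) \<in> Ocl 1 (-F)"
      unfolding Ocl_def mF
    proof (intro CollectI conjI ballI)
      show "integrable (TP R) (\<lambda>z. \<psi> z / om)" using L1 unfolding R_def by simp
      fix i assume i: "i \<in> R"
      show "Osc_j R i (\<lambda>z. \<psi> z / om) \<le> ereal 1"
        unfolding Osc_j_def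
      proof (rule Sup_least, clarify)
        fix y :: "'n \<Rightarrow> real" and s :: real assume ys: "y \<in> PiE R (\<lambda>_. {0..<1})" "s \<in> {0..<1}"
        have "ereal \<bar>\<psi> y - \<psi> (y(i:=s))\<bar> \<le> ereal om" using osc_elem[OF i ys, of \<psi>] O by simp
        then have "\<bar>\<psi> y - \<psi> (y(i:=s))\<bar> / om \<le> 1" using om by simp
        then show "ereal \<bar>\<psi> y / om - \<psi> (y(i:=s)) / om\<bar> \<le> ereal 1"
          using om by (simp add: diff_divide_distrib[symmetric])
      qed
    qed
    have Bu: "ereal (((\<integral>y. \<psi> y \<partial>cond \<rho> F X0) - (\<integral>y. \<psi> y \<partial>cond \<rho> F (X0(c0:=t0)))) / om) \<le> B \<rho> k"
      if "\<forall>i\<in>F. X0 i \<in> {0..<1}" "c0 \<in> F" "t0 \<in> {0..<1}" for X0 :: "'n \<Rightarrow> real" and c0 and t0 :: real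
    proof -
      have "ereal ((\<integral>y. \<psi> y / om \<partial>cond \<rho> F X0) - (\<integral>y. \<psi> y / om \<partial>cond \<rho> F (X0(c0:=t0)))) \<le> B \<rho> k"
        unfolding B_def
        by (rule Sup_upper) (use that cardF Ocl in blast)
      then show ?thesis by (simp add: diff_divide_distrib)
    qed
    show ?thesis
    proof (cases "B \<rho> k")
      case (real bb)
      have "(\<integral>y. \<psi> y \<partial>marg R (cond \<rho> F' x)) - (\<integral>y. \<psi> y \<partial>marg R (cond \<rho> F' x')) \<le> 2 * (bb * om)"
      proof (rule main)
        fix X0 :: "'n \<Rightarrow> real" and c0 and t0 :: real assume h: "\<forall>i\<in>F. X0 i \<in> {0..<1}" "c0 \<in> F" "t0 \<in> {0..<1}"
        from Bu[OF h] real have "((\<integral>y. \<psi> y \<partial>cond \<rho> F X0) - (\<integral>y. \<psi> y \<partial>cond \<rho> F (X0(c0:=t0)))) / om \<le> bb"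
          by simp
        then show "(\<integral>y. \<psi> y \<partial>cond \<rho> F X0) - (\<integral>y. \<psi> y \<partial>cond \<rho> F (X0(c0:=t0))) \<le> bb * om"
          using om by (simp add: pos_divide_le_eq)
      qed
      then show ?thesis using real O by simp
    next
      case PInf
      then show ?thesis using O om by simp
    next
      case MInf
      have "\<forall>i\<in>F. (\<lambda>_. 0::real) i \<in> {0..<1}" by simp
      moreover have "c \<in> F" unfolding F_def by simp
      ultimately show ?thesis using Bu[of "\<lambda>_. 0" c 0] MInf by simp
    qed
  qed
  then show ?thesis unfolding R_def F'_def x'_def .
qed

end
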